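(* Let $v\in C^\infty(\mathbb T,\mathbb R)$, $j\in\mathbb Z\setminus\{0\}$, and $\widetilde V(t,x):=\cos(jt)v(x)-1$. Then the resonant average of $\widetilde V$ with respect to $K_0=|D|+1$ satisfies $$\langle\widetilde V\rangle=\mathtt v(x)-1+R,\qquad \mathtt v(x):=\mathrm{Re}(v_je^{\mathrm ijx}),$$ where $R\in\mathcal A_{-1}$ is selfadjoint.
   Context: $\mathbb T=\mathbb R/2\pi\mathbb Z$; $v_j$ the $j$-th Fourier coefficient of $v$; $|D|u=\sum|k|u_ke^{\mathrm ikx}$; $K_0:=|D|+1$. Resonant average: $\langle\widetilde V\rangle=\frac1{2\pi}\int_0^{2\pi}e^{\mathrm isK_0}\widetilde V(s)e^{-\mathrm isK_0}ds$. $S^\rho_{\rm per}$: $a\in C^\infty(\mathbb T\times\mathbb R)$ with $|\partial_x^\alpha\partial_\xi^\beta a|\le C_{\alpha\beta}\langle\xi\rangle^{\rho-\beta}$; $\mathrm{Op}(a)u=\sum_ka(x,k)u_ke^{\mathrm ikx}$; $\mathcal A_\rho=\{\mathrm{Op}(a):a\in S^\rho_{\rm per}\}$. *)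

theory Defs
  imports "HOL-Analysis.Analysis"
begin

text \<open>Functions on the torus are 2pi-periodic functions on the reals.
  Operators are represented on Fourier-coefficient sequences (int => complex),
  i.e. via the isometry L2(T) = l2(Z); the identities are required on finitely
  supported sequences (trigonometric polynomials), a dense common domain.\<close>

type_synonym coeffs = "int \<Rightarrow> complex"
type_synonym oper = "coeffs \<Rightarrow> coeffs"

definition periodic2pi :: "(real \<Rightarrow> 'b) \<Rightarrow> bool" where
  "periodic2pi f \<longleftrightarrow> (\<forall>x. f (x + 2 * pi) = f x)"

definition smooth_real :: "(real \<Rightarrow> real) \<Rightarrow> bool" where
  "smooth_real v \<longleftrightarrow> (\<forall>n x. ((deriv ^^ n) v) differentiable (at x))"

definition fcoeff :: "(real \<Rightarrow> complex) \<Rightarrow> int \<Rightarrow> complex" where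
  "fcoeff f k = integral {0..2*pi} (\<lambda>x. f x * exp (- \<i> * of_int k * of_real x)) / of_real (2*pi)"

definition finsupp :: "coeffs \<Rightarrow> bool" where
  "finsupp c \<longleftrightarrow> finite {k. c k \<noteq> 0}"

definition pdx :: "(real \<Rightarrow> real \<Rightarrow> complex) \<Rightarrow> real \<Rightarrow> real \<Rightarrow> complex" where
  "pdx a = (\<lambda>x \<xi>. vector_derivative (\<lambda>y. a y \<xi>) (at x))"

definition pdxi :: "(real \<Rightarrow> real \<Rightarrow> complex) \<Rightarrow> real \<Rightarrow> real \<Rightarrow> complex" where
  "pdxi a = (\<lambda>x \<xi>. vector_derivative (\<lambda>\<eta>. a x \<eta>) (at \<xi>))"

fun pdword :: "bool list \<Rightarrow> (real \<Rightarrow> real \<Rightarrow> complex) \<Rightarrow> real \<Rightarrow> real \<Rightarrow> complex" where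
  "pdword [] a = a"
| "pdword (b # ws) a = (if b then pdx else pdxi) (pdword ws a)"

definition smooth2 :: "(real \<Rightarrow> real \<Rightarrow> complex) \<Rightarrow> bool" where
  "smooth2 a \<longleftrightarrow> (\<forall>ws. continuous_on UNIV (\<lambda>(x, \<xi>). pdword ws a x \<xi>) \<and>
      (\<forall>x \<xi>. (\<lambda>y. pdword ws a y \<xi>) differentiable (at x) \<and>
              (\<lambda>\<eta>. pdword ws a x \<eta>) differentiable (at \<xi>)))"

definition Sper :: "real \<Rightarrow> (real \<Rightarrow> real \<Rightarrow> complex) \<Rightarrow> bool" where
  "Sper \<rho> a \<longleftrightarrow> smooth2 a \<and> (\<forall>x \<xi>. a (x + 2*pi) \<xi> = a x \<xi>) \<and>
     (\<forall>\<alpha> \<beta>::nat. \<exists>C. \<forall>x \<xi>.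
        norm ((pdx ^^ \<alpha>) ((pdxi ^^ \<beta>) a) x \<xi>) \<le> C * (sqrt (1 + \<xi>\<^sup>2)) powr (\<rho> - real \<beta>))"

text \<open>Op(a) u = sum_k a(x,k) u_k e^{ikx}, written on Fourier coefficients:
  (Op(a)u)_m = sum_k (a(.,k))_{m-k} u_k.\<close>
definition Op :: "(real \<Rightarrow> real \<Rightarrow> complex) \<Rightarrow> oper" where
  "Op a c = (\<lambda>m. \<Sum>\<^sub>\<infinity>k. fcoeff (\<lambda>x. a x (of_int k)) (m - k) * c k)"

definition mult_op :: "(real \<Rightarrow> complex) \<Rightarrow> oper" where
  "mult_op f c = (\<lambda>m. \<Sum>\<^sub>\<infinity>k. fcoeff f (m - k) * c k)"

definition expK0 :: "real \<Rightarrow> oper" where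
  "expK0 s c = (\<lambda>k. exp (\<i> * of_real s * of_int (\<bar>k\<bar> + 1)) * c k)"

definition res_avg :: "(real \<Rightarrow> oper) \<Rightarrow> oper" where
  "res_avg V c = (\<lambda>m. integral {0..2*pi} (\<lambda>s. expK0 s (V s (expK0 (- s) c)) m) / of_real (2*pi))"

text \<open>Selfadjointness w.r.t. the (Parseval) L2 inner product, on trigonometric polynomials.\<close>
definition selfadjoint_op :: "oper \<Rightarrow> bool" where
  "selfadjoint_op R \<longleftrightarrow> (\<forall>c d. finsupp c \<longrightarrow> finsupp d \<longrightarrow>
     (\<Sum>\<^sub>\<infinity>m. R c m * cnj (d m)) = (\<Sum>\<^sub>\<infinity>m. c m * cnj (R d m)))"

end

theory Submission
  imports Defs "HOL-Computational_Algebra.Polynomial"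
begin


definition sm :: "(real \<Rightarrow> real) \<Rightarrow> bool" where
  "sm f \<longleftrightarrow> (\<forall>n x. ((deriv ^^ n) f) differentiable (at x))"

lemma poly_exp_tendsto: "((\<lambda>u. poly p u * exp (-u)) \<longlongrightarrow> (0::real)) at_top"
proof -
  have "((\<lambda>u. \<Sum>i\<le>degree p. coeff p i * (u ^ i / exp u)) \<longlongrightarrow> (\<Sum>i\<le>degree p. coeff p i * 0)) at_top"
    by (intro tendsto_sum tendsto_mult tendsto_const tendsto_power_div_exp_0)
  then show ?thesis
    by (simp add: poly_altdef sum_divide_distrib exp_minus field_simps)
qed

definition E :: "real \<Rightarrow> real" where
  "E s = (if s > 0 then exp (- 1 / s) else 0)"

definition G :: "real poly \<Rightarrow> real \<Rightarrow> real" where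
  "G p s = (if s > 0 then poly p (1/s) * exp (- 1 / s) else 0)"

definition Dp :: "real poly \<Rightarrow> real poly" where
  "Dp p = [:0,0,1:] * (p - pderiv p)"

lemma G_deriv: "(G p has_real_derivative G (Dp p) s) (at s)"
proof -
  consider "s > 0" | "s < 0" | "s = 0" by linarith
  then show ?thesis
  proof cases
    case 1
    have d: "((\<lambda>s. poly p (1/s) * exp (- 1 / s)) has_real_derivative
         poly (pderiv p) (1/s) * (- 1 / s^2) * exp (-1/s) + poly p (1/s) * (exp (-1/s) * (1/s^2))) (at s)"
      using 1
      by (auto intro!: derivative_eq_intros DERIV_chain2[OF poly_DERIV]  simp: power2_eq_square field_simps)
    have e: "poly (pderiv p) (1/s) * (- 1 / s^2) * exp (-1/s) + poly p (1/s) * (exp (-1/s) * (1/s^2))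
        = G (Dp p) s"
      using 1 by (simp add: G_def Dp_def algebra_simps power2_eq_square divide_simps)
    show ?thesis
      apply (rule has_field_derivative_transform_within_open[where S="{0<..}"])
      using d e 1 by (auto simp: G_def)
  next
    case 2
    have d: "((\<lambda>s. 0) has_real_derivative 0) (at s)" by simp
    have "(G p has_real_derivative 0) (at s)"
      apply (rule has_field_derivative_transform_within_open[where S="{..<0}", OF d])
      using 2 by (auto simp: G_def)
    then show ?thesis using 2 by (simp add: G_def)
  next
    case 3
    have L: "((\<lambda>h. (G p h - G p 0) / h) \<longlongrightarrow> 0) (at_left 0)"
    proof -
      have "eventually (\<lambda>h. 0 = (G p h - G p 0) / h) (at_left (0::real))"
      proof -
        have "eventually (\<lambda>h. h \<in> {-1<..<0}) (at_left (0::real))" by (rule eventually_at_left_real) simp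
        then show ?thesis by (rule eventually_mono) (auto simp: G_def)
      qed
      then show ?thesis by (rule Lim_transform_eventually[OF tendsto_const])
    qed
    have R: "((\<lambda>h. (G p h - G p 0) / h) \<longlongrightarrow> 0) (at_right 0)"
    proof -
      have t: "((\<lambda>u. poly (pCons 0 p) u * exp (-u)) \<longlongrightarrow> (0::real)) at_top"
        by (rule poly_exp_tendsto)
      have t2: "((\<lambda>h. poly (pCons 0 p) (inverse h) * exp (- inverse h)) \<longlongrightarrow> (0::real)) (at_right 0)"
        by (rule filterlim_compose[OF t filterlim_inverse_at_top_right])
      have "eventually (\<lambda>h. poly (pCons 0 p) (inverse h) * exp (- inverse h) = (G p h - G p 0) / h) (at_right (0::real))"
      proof -
        have "eventually (\<lambda>h. h \<in> {0<..<1}) (at_right (0::real))" by (rule eventually_at_right_real) simp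
        then show ?thesis by (rule eventually_mono) (auto simp: G_def field_simps)
      qed
      then show ?thesis using t2 by (intro Lim_transform_eventually[OF t2])
    qed
    have "((\<lambda>h. (G p h - G p 0) / (h - 0)) \<longlongrightarrow> 0) (at 0)"
      using L R by (simp add: filterlim_split_at_real)
    then have "(G p has_real_derivative 0) (at 0)"
      by (simp add: has_field_derivative_iff)
    then show ?thesis using 3 by (simp add: G_def)
  qed
qed

lemma funpow_deriv_G: "(deriv^^n) (G p) = G ((Dp^^n) p)"
proof (induction n arbitrary: p)
  case 0 then show ?case by simp
next
  case (Suc n)
  have "(deriv^^Suc n) (G p) = deriv (G ((Dp^^n) p))" using Suc by simp
  also have "\<dots> = G (Dp ((Dp^^n) p))"
    by (rule ext, rule DERIV_imp_deriv, rule G_deriv)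
  finally show ?case by simp
qed

lemma sm_G: "sm (G p)"
  unfolding sm_def funpow_deriv_G using G_deriv real_differentiable_def by blast

lemma sm_D: "sm f \<Longrightarrow> ((deriv^^n) f has_real_derivative (deriv^^Suc n) f x) (at x)"
  unfolding sm_def by (simp add: DERIV_deriv_iff_real_differentiable)

lemma sm_affine_deriv:
  assumes "sm f"
  shows "(deriv^^n) (\<lambda>t. f (a*t+c)) = (\<lambda>t. a^n * (deriv^^n) f (a*t+c))"
proof (induction n)
  case 0 then show ?case by simp
next
  case (Suc n)
  have "(deriv^^Suc n) (\<lambda>t. f (a*t+c)) = deriv (\<lambda>t. a^n * (deriv^^n) f (a*t+c))" using Suc by simp
  also have "\<dots> = (\<lambda>t. a^Suc n * (deriv^^Suc n) f (a*t+c))"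
  proof
    fix t
    have "((\<lambda>t. a^n * (deriv^^n) f (a*t+c)) has_real_derivative a^n * ((deriv^^Suc n) f (a*t+c) * a)) (at t)"
      by (intro DERIV_cmult DERIV_chain2[OF sm_D[OF assms]]) (auto intro!: derivative_eq_intros)
    then show "deriv (\<lambda>t. a^n * (deriv^^n) f (a*t+c)) t = a^Suc n * (deriv^^Suc n) f (a*t+c)"
      by (intro DERIV_imp_deriv) (simp add: algebra_simps)
  qed
  finally show ?case .
qed

lemma sm_affine: "sm f \<Longrightarrow> sm (\<lambda>t. f (a*t+c))"
  unfolding sm_def[of "\<lambda>t. f (a*t+c)"] sm_affine_deriv
proof (intro allI)
  fix n x assume f: "sm f"
  have "((\<lambda>t. a^n * (deriv^^n) f (a*t+c)) has_real_derivative a^n * ((deriv^^Suc n) f (a*x+c) * a)) (at x)"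
    by (intro DERIV_cmult DERIV_chain2[OF sm_D[OF f]]) (auto intro!: derivative_eq_intros)
  then show "(\<lambda>t. a^n * (deriv^^n) f (a*t+c)) differentiable (at x)"
    using real_differentiable_def by blast
qed

lemma funpow_deriv_add:
  fixes u w :: "real \<Rightarrow> real"
  assumes "\<forall>m<n. \<forall>x. (deriv^^m) u differentiable (at x)" "\<forall>m<n. \<forall>x. (deriv^^m) w differentiable (at x)"
  shows "(deriv^^n) (\<lambda>t. u t + w t) = (\<lambda>t. (deriv^^n) u t + (deriv^^n) w t)"
  using assms
proof (induction n)
  case 0 then show ?case by simp
next
  case (Suc n)
  have "(deriv^^Suc n) (\<lambda>t. u t + w t) = deriv (\<lambda>t. (deriv^^n) u t + (deriv^^n) w t)" using Suc by simp
  also have "\<dots> = (\<lambda>t. (deriv^^Suc n) u t + (deriv^^Suc n) w t)"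
  proof
    fix t
    have "((deriv^^n) u has_real_derivative (deriv^^Suc n) u t) (at t)"
      using Suc.prems(1) by (simp add: DERIV_deriv_iff_real_differentiable)
    moreover have "((deriv^^n) w has_real_derivative (deriv^^Suc n) w t) (at t)"
      using Suc.prems(2) by (simp add: DERIV_deriv_iff_real_differentiable)
    ultimately show "deriv (\<lambda>t. (deriv^^n) u t + (deriv^^n) w t) t = (deriv^^Suc n) u t + (deriv^^Suc n) w t"
      by (intro DERIV_imp_deriv DERIV_add)
  qed
  finally show ?case .
qed

lemma sm_add: "sm u \<Longrightarrow> sm w \<Longrightarrow> sm (\<lambda>t. u t + w t)"
  unfolding sm_def
  apply (subst funpow_deriv_add)
  by (auto intro!: differentiable_add)

lemma sm_deriv: "sm f \<Longrightarrow> sm (deriv f)"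
  unfolding sm_def by (metis funpow_Suc_right o_apply)

lemma deriv_mult_fun: "sm f \<Longrightarrow> sm g \<Longrightarrow> deriv (\<lambda>t. f t * g t) = (\<lambda>t. deriv f t * g t + f t * deriv g t)"
proof
  fix t assume f: "sm f" and g: "sm g"
  have "(f has_real_derivative deriv f t) (at t)" using sm_D[OF f, of 0] by simp
  moreover have "(g has_real_derivative deriv g t) (at t)" using sm_D[OF g, of 0] by simp
  ultimately show "deriv (\<lambda>t. f t * g t) t = deriv f t * g t + f t * deriv g t"
    by (intro DERIV_imp_deriv) (auto intro!: derivative_eq_intros)
qed

lemma sm_mult_aux: "\<forall>f g. sm f \<longrightarrow> sm g \<longrightarrow> (\<forall>x. (deriv^^n) (\<lambda>t. f t * g t) differentiable (at x))"
proof (induction n rule: less_induct)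
  case (less n)
  show ?case
  proof (intro allI impI)
    fix f g x assume f: "sm f" and g: "sm g"
    show "(deriv^^n) (\<lambda>t. f t * g t) differentiable (at x)"
    proof (cases n)
      case 0
      have "(f has_real_derivative deriv f x) (at x)" using sm_D[OF f, of 0] by simp
      moreover have "(g has_real_derivative deriv g x) (at x)" using sm_D[OF g, of 0] by simp
      ultimately have "((\<lambda>t. f t * g t) has_real_derivative (deriv f x * g x + deriv g x * f x)) (at x)"
        by (rule DERIV_mult)
      then show ?thesis using 0 real_differentiable_def by auto
    next
      case (Suc m)
      have f': "sm (deriv f)" and g': "sm (deriv g)" using sm_deriv f g by auto
      have ih: "(deriv^^k) (\<lambda>t. u t * w t) differentiable (at y)" if "k \<le> m" "sm u" "sm w" for k u w y
      proof -
        have "k < n" using that Suc by simp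
        then show ?thesis using less.IH that by blast
      qed
      have "(deriv^^n) (\<lambda>t. f t * g t) = (deriv^^m) (\<lambda>t. deriv f t * g t + f t * deriv g t)"
        using Suc deriv_mult_fun[OF f g] by (simp add: funpow_Suc_right del: funpow.simps)
      also have "\<dots> = (\<lambda>t. (deriv^^m) (\<lambda>t. deriv f t * g t) t + (deriv^^m) (\<lambda>t. f t * deriv g t) t)"
        apply (rule funpow_deriv_add)
        using ih f g f' g' by simp_all
      finally have eq: "(deriv^^n) (\<lambda>t. f t * g t) = (\<lambda>t. (deriv^^m) (\<lambda>t. deriv f t * g t) t + (deriv^^m) (\<lambda>t. f t * deriv g t) t)" .
      show ?thesis unfolding eq
        by (rule differentiable_add; rule ih) (simp_all add: f g f' g')
    qed
  qed
qed

lemma sm_mult: assumes "sm f" "sm g" shows "sm (\<lambda>t. f t * g t)"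
  unfolding sm_def[of "\<lambda>t. f t * g t"]
proof (intro allI)
  fix n x
  show "(deriv^^n) (\<lambda>t. f t * g t) differentiable (at x)" by (rule sm_mult_aux[of n, rule_format, OF assms])
qed

lemma sm_const: "sm (\<lambda>t. c)"
proof -
  have "(deriv^^n) (\<lambda>t. c) = (\<lambda>t. if n = 0 then c else 0)" for n
    by (induction n) auto
  then show ?thesis unfolding sm_def by simp
qed

lemma sm_E: "sm E"
proof -
  have "E = G 1" by (auto simp: E_def G_def fun_eq_iff)
  then show ?thesis using sm_G[of 1] by simp
qed

definition phi :: "real \<Rightarrow> real" where
  "phi t = E (1/4 + t) * E (1/4 - t) / (E (1/4))^2"

lemma sm_phi: "sm phi"
proof -
  have "sm (\<lambda>t. E (1 * t + 1/4) * E ((-1) * t + 1/4) * (1 / (E (1/4))^2))"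
    by (intro sm_mult sm_affine[OF sm_E] sm_const)
  moreover have "phi = (\<lambda>t. E (1 * t + 1/4) * E ((-1) * t + 1/4) * (1 / (E (1/4))^2))"
    by (auto simp: phi_def fun_eq_iff algebra_simps)
  ultimately show ?thesis by simp
qed

lemma phi_0: "phi 0 = 1"
  by (simp add: phi_def E_def power2_eq_square)

lemma phi_zero: "\<bar>t\<bar> \<ge> 1/4 \<Longrightarrow> phi t = 0"
  by (auto simp: phi_def E_def)




lemma integral_exp_int:
  "integral {0..2*pi} (\<lambda>x. exp (\<i> * of_int n * of_real x)) = (if n = 0 then of_real (2*pi) else 0)"
proof (cases "n = 0")
  case True then show ?thesis by (simp add: scaleR_conv_of_real)
next
  case False
  have d: "((\<lambda>x. exp (\<i> * of_int n * of_real x) / (\<i> * of_int n)) has_vector_derivative exp (\<i> * of_int n * of_real x)) (at x within {0..2*pi})" for x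
  proof -
    have "((\<lambda>z. exp (\<i> * of_int n * z) / (\<i> * of_int n)) has_field_derivative exp (\<i> * of_int n * of_real x) * (\<i> * of_int n) / (\<i> * of_int n)) (at (of_real x :: complex))"
      by (auto intro!: derivative_eq_intros)
    then have "((\<lambda>z. exp (\<i> * of_int n * z) / (\<i> * of_int n)) has_field_derivative exp (\<i> * of_int n * of_real x)) (at (of_real x :: complex))"
      using False by simp
    from has_vector_derivative_real_field[OF this] show ?thesis
      by (rule has_vector_derivative_at_within)
  qed
  have "((\<lambda>x. exp (\<i> * of_int n * of_real x)) has_integral
     (exp (\<i> * of_int n * of_real (2*pi)) / (\<i> * of_int n) - exp (\<i> * of_int n * of_real 0) / (\<i> * of_int n))) {0..2*pi}"
    by (rule fundamental_theorem_of_calculus[OF _ d]) simp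
  moreover have "exp (\<i> * of_int n * of_real (2*pi)) = 1"
  proof -
    have "exp (\<i> * of_int n * of_real (2*pi)) = exp ((2 * of_int n * pi) * \<i>)"
      by (simp add: algebra_simps)
    also have "\<dots> = 1" by (rule exp_integer_2pi) simp
    finally show ?thesis .
  qed
  ultimately show ?thesis using False by (simp add: integral_unique)
qed

lemma fcoeff_exp: "fcoeff (\<lambda>x. exp (\<i> * of_int p * of_real x)) n = (if p = n then 1 else 0)"
proof -
  have "(\<lambda>x. exp (\<i> * of_int p * of_real x) * exp (- \<i> * of_int n * of_real x)) = (\<lambda>x. exp (\<i> * of_int (p - n) * of_real x))"
    by (rule ext, subst exp_add[symmetric]) (simp add: algebra_simps)
  then show ?thesis unfolding fcoeff_def using integral_exp_int[of "p - n"] by (simp add: scaleR_conv_of_real)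
qed

lemma cont_exp_int [continuous_intros]: "continuous_on S (\<lambda>x::real. exp (\<i> * of_int n * of_real x))"
  by (intro continuous_intros)

lemma integrable_fc: "continuous_on {0..2*pi} f \<Longrightarrow> (\<lambda>x. f x * exp (- \<i> * of_int k * of_real x)) integrable_on {0..2*pi}"
  by (intro integrable_continuous_interval continuous_intros) auto

lemmas integrable_fc' = integrable_fc[simplified]

lemma norm_exp_ix: "norm (exp (- (\<i> * of_int n * of_real x))) = 1"
proof -
  have "- (\<i> * of_int n * of_real x) = \<i> * complex_of_real (- (of_int n * x))" by simp
  then show ?thesis by (simp only: norm_exp_i_times)
qed

lemma fcoeff_add: assumes "continuous_on {0..2*pi} f" "continuous_on {0..2*pi} g" shows
   "fcoeff (\<lambda>x. f x + g x) n = fcoeff f n + fcoeff g n"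
  unfolding fcoeff_def distrib_right
  by (subst integral_add[OF integrable_fc[OF assms(1)] integrable_fc[OF assms(2)]]) (simp add: add_divide_distrib)

lemma fcoeff_diff: assumes "continuous_on {0..2*pi} f" "continuous_on {0..2*pi} g" shows
   "fcoeff (\<lambda>x. f x - g x) n = fcoeff f n - fcoeff g n"
  unfolding fcoeff_def left_diff_distrib
  by (subst integral_diff[OF integrable_fc[OF assms(1)] integrable_fc[OF assms(2)]]) (simp add: diff_divide_distrib)

lemma fcoeff_cmult: "fcoeff (\<lambda>x. c * f x) n = c * fcoeff f n"
  unfolding fcoeff_def mult.assoc by simp

lemma fcoeff_sum: "finite S \<Longrightarrow> (\<And>i. i \<in> S \<Longrightarrow> continuous_on {0..2*pi} (f i)) \<Longrightarrow>
   fcoeff (\<lambda>x. \<Sum>i\<in>S. f i x) n = (\<Sum>i\<in>S. fcoeff (f i) n)"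
  unfolding fcoeff_def sum_distrib_right
  by (subst integral_sum) (simp_all add: integrable_fc' sum_divide_distrib)

lemma fcoeff_const: "fcoeff (\<lambda>x. c) n = (if n = 0 then c else 0)"
  using fcoeff_cmult[of c "\<lambda>x. exp (\<i> * of_int 0 * of_real x)" n] fcoeff_exp[of 0 n] by auto

lemma fcoeff_cnj: "fcoeff (\<lambda>x. cnj (f x)) n = cnj (fcoeff f (- n))"
  unfolding fcoeff_def by (simp add: integral_cnj exp_cnj)

lemma fcoeff_bound:
  assumes "continuous_on {0..2*pi} f" "\<And>x. x \<in> {0..2*pi} \<Longrightarrow> norm (f x) \<le> M"
  shows "norm (fcoeff f n) \<le> M"
proof -
  have M: "0 \<le> M" using assms(2)[of 0] by (auto intro: order_trans[OF norm_ge_zero])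
  have "norm (integral {0..2*pi} (\<lambda>x. f x * exp (- \<i> * of_int n * of_real x))) \<le> M * measure lborel (cbox 0 (2*pi))"
    apply (rule has_integral_bound[OF M])
    unfolding box_real(2) apply (rule integrable_integral[OF integrable_fc[OF assms(1)]])
    using assms(2) by (simp add: norm_mult norm_exp_ix)
  then show ?thesis unfolding fcoeff_def by (simp add: norm_divide field_simps)
qed

lemma alg_aux: "(a::complex) * (- i * k * e) + b * e = b * e - i * k * (a * e)"
  by (simp add: algebra_simps)

lemma fcoeff_parts:
  assumes d: "\<And>x. (f has_vector_derivative f' x) (at x)" and c: "continuous_on UNIV f'"
    and p: "f (2*pi) = f 0"
  shows "fcoeff f' n = \<i> * of_int n * fcoeff f n"
proof -
  let ?e = "\<lambda>x. exp (- \<i> * of_int n * of_real x)"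
  have cf: "continuous_on {0..2*pi} f"
    using d by (meson continuous_at_imp_continuous_on has_vector_derivative_continuous)
  have hd: "((\<lambda>x. f x * ?e x) has_vector_derivative (f' x * ?e x - \<i> * of_int n * (f x * ?e x))) (at x within {0..2*pi})" for x
  proof -
    have e: "(?e has_vector_derivative (- \<i> * of_int n) * ?e x) (at x)"
    proof -
      have "((\<lambda>x. exp (- \<i> * of_int n * x)) has_field_derivative exp (- \<i> * of_int n * of_real x) * (- \<i> * of_int n)) (at (of_real x :: complex))"
        by (auto intro!: derivative_eq_intros)
      from has_vector_derivative_real_field[OF this] show ?thesis by (simp add: mult.commute)
    qed
    have d2: "((\<lambda>x. f x * ?e x) has_vector_derivative f x * ((- \<i> * of_int n) * ?e x) + f' x * ?e x) (at x)"
      by (rule has_vector_derivative_mult[OF d e])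
    have eq: "f x * ((- \<i> * of_int n) * ?e x) + f' x * ?e x = f' x * ?e x - \<i> * of_int n * (f x * ?e x)"
      by (simp only: alg_aux)
    show ?thesis unfolding eq[symmetric] by (rule has_vector_derivative_at_within[OF d2])
  qed
  have "((\<lambda>x. f' x * ?e x - \<i> * of_int n * (f x * ?e x)) has_integral (f (2*pi) * ?e (2*pi) - f 0 * ?e 0)) {0..2*pi}"
    by (rule fundamental_theorem_of_calculus[OF _ hd]) simp
  moreover have "?e (2*pi) = 1"
  proof -
    have "?e (2*pi) = exp ((2 * of_int (-n) * pi) * \<i>)" by (simp add: algebra_simps)
    also have "\<dots> = 1" by (rule exp_integer_2pi) simp
    finally show ?thesis .
  qed
  ultimately have "((\<lambda>x. f' x * ?e x - \<i> * of_int n * (f x * ?e x)) has_integral 0) {0..2*pi}"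
    using p by simp
  then have "integral {0..2*pi} (\<lambda>x. f' x * ?e x - \<i> * of_int n * (f x * ?e x)) = 0"
    by (rule integral_unique)
  moreover have "integral {0..2*pi} (\<lambda>x. f' x * ?e x - \<i> * of_int n * (f x * ?e x)) =
      integral {0..2*pi} (\<lambda>x. f' x * ?e x) - \<i> * of_int n * integral {0..2*pi} (\<lambda>x. f x * ?e x)"
  proof -
    have i1: "(\<lambda>x. f' x * ?e x) integrable_on {0..2*pi}"
      by (rule integrable_fc[OF continuous_on_subset[OF c subset_UNIV]])
    have i2: "(\<lambda>x. \<i> * of_int n * (f x * ?e x)) integrable_on {0..2*pi}"
      by (rule integrable_on_mult_right[OF integrable_fc[OF cf]])
    show ?thesis by (subst integral_diff[OF i1 i2]) simp
  qed
  ultimately show ?thesis unfolding fcoeff_def by (simp add: field_simps)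
qed




lemma sm_eq: "smooth_real v = sm v" by (simp add: smooth_real_def sm_def)

lemma sm_cont: "sm f \<Longrightarrow> continuous_on S ((deriv^^p) f)"
  by (meson DERIV_isCont continuous_at_imp_continuous_on sm_D)

lemma sm_periodic:
  assumes "sm f" "\<And>x. f (x + 2*pi) = f x"
  shows "(deriv^^p) f (x + 2*pi) = (deriv^^p) f x"
proof (induction p arbitrary: x)
  case 0 then show ?case using assms by simp
next
  case (Suc p)
  have "((\<lambda>y. (deriv^^p) f (y + 2*pi)) has_real_derivative (deriv^^Suc p) f (x + 2*pi) * 1) (at x)"
    by (intro DERIV_chain2[OF sm_D[OF assms(1)]]) (auto intro!: derivative_eq_intros)
  moreover have "(\<lambda>y. (deriv^^p) f (y + 2*pi)) = (deriv^^p) f" using Suc by auto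
  ultimately have "((deriv^^p) f has_real_derivative (deriv^^Suc p) f (x + 2*pi)) (at x)" by simp
  moreover have "((deriv^^p) f has_real_derivative (deriv^^Suc p) f x) (at x)" by (rule sm_D[OF assms(1)])
  ultimately show ?case by (rule DERIV_unique)
qed

lemma fcoeff_deriv_pow:
  assumes "sm f" "\<And>x. f (x + 2*pi) = f x"
  shows "fcoeff (\<lambda>x. complex_of_real ((deriv^^p) f x)) n = (\<i> * of_int n)^p * fcoeff (\<lambda>x. complex_of_real (f x)) n"
proof (induction p)
  case 0 then show ?case by simp
next
  case (Suc p)
  have "fcoeff (\<lambda>x. complex_of_real ((deriv^^Suc p) f x)) n = \<i> * of_int n * fcoeff (\<lambda>x. complex_of_real ((deriv^^p) f x)) n"
  proof (rule fcoeff_parts)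
    show "((\<lambda>x. complex_of_real ((deriv ^^ p) f x)) has_vector_derivative complex_of_real ((deriv ^^ Suc p) f x)) (at x)" for x
      by (rule has_vector_derivative_of_real[OF sm_D[OF assms(1)]])
    show "continuous_on UNIV (\<lambda>x. complex_of_real ((deriv ^^ Suc p) f x))"
      by (intro continuous_intros sm_cont[OF assms(1)])
    show "complex_of_real ((deriv ^^ p) f (2 * pi)) = complex_of_real ((deriv ^^ p) f 0)"
      using sm_periodic[OF assms, of p 0] by simp
  qed
  then show ?case using Suc by simp
qed

lemma pow_le_aux: "(0::real) \<le> t \<Longrightarrow> (1 + t)^N \<le> 2^N * (1 + t^N)"
proof (cases "t \<le> 1")
  case True
  assume "0 \<le> t"
  have "(1 + t)^N \<le> 2^N" using True \<open>0 \<le> t\<close> by (intro power_mono) auto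
  also have "\<dots> \<le> 2^N * (1 + t^N)" using \<open>0 \<le> t\<close> by simp
  finally show ?thesis .
next
  case False
  assume "0 \<le> t"
  have "(1 + t)^N \<le> (2*t)^N" using False by (intro power_mono) auto
  also have "\<dots> \<le> 2^N * (1 + t^N)" using \<open>0 \<le> t\<close> by (simp add: power_mult_distrib)
  finally show ?thesis .
qed

lemma fourier_decay:
  assumes "sm f" "\<And>x. f (x + 2*pi) = f x"
  shows "\<exists>D. \<forall>n. (1 + real_of_int \<bar>n\<bar>)^N * norm (fcoeff (\<lambda>x. complex_of_real (f x)) n) \<le> D"
proof -
  have bnd: "\<exists>M. \<forall>n. real_of_int \<bar>n\<bar>^p * norm (fcoeff (\<lambda>x. complex_of_real (f x)) n) \<le> M" for p
  proof -
    obtain M where M: "\<And>x. x \<in> {0..2*pi} \<Longrightarrow> norm (complex_of_real ((deriv^^p) f x)) \<le> M"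
    proof -
      have "continuous_on {0..2*pi} (\<lambda>x. complex_of_real ((deriv^^p) f x))"
        by (intro continuous_intros sm_cont[OF assms(1)])
      from continuous_on_compact_bound[OF compact_Icc this] that show ?thesis by blast
    qed
    have "norm (fcoeff (\<lambda>x. complex_of_real ((deriv^^p) f x)) n) \<le> M" for n
      by (rule fcoeff_bound[OF _ M]) (intro continuous_intros sm_cont[OF assms(1)])
    then show ?thesis
      by (intro exI[of _ M]) (simp add: fcoeff_deriv_pow[OF assms] norm_mult norm_power)
  qed
  obtain M0 where M0: "\<And>n. real_of_int \<bar>n\<bar>^0 * norm (fcoeff (\<lambda>x. complex_of_real (f x)) n) \<le> M0"
    using bnd by blast
  obtain MN where MN: "\<And>n. real_of_int \<bar>n\<bar>^N * norm (fcoeff (\<lambda>x. complex_of_real (f x)) n) \<le> MN"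
    using bnd by blast
  show ?thesis
  proof (intro exI allI)
    fix n
    let ?V = "norm (fcoeff (\<lambda>x. complex_of_real (f x)) n)"
    have "(1 + real_of_int \<bar>n\<bar>)^N * ?V \<le> 2^N * (1 + real_of_int \<bar>n\<bar>^N) * ?V"
      by (intro mult_right_mono pow_le_aux) auto
    also have "\<dots> = 2^N * (real_of_int \<bar>n\<bar>^0 * ?V + real_of_int \<bar>n\<bar>^N * ?V)" by (simp add: algebra_simps)
    also have "\<dots> \<le> 2^N * (M0 + MN)" using M0[of n] MN[of n] by (intro mult_left_mono) auto
    finally show "(1 + real_of_int \<bar>n\<bar>)^N * ?V \<le> 2^N * (M0 + MN)" .
  qed
qed

lemma fcoeff_real_cnj: "fcoeff (\<lambda>x. complex_of_real (f x)) (- n) = cnj (fcoeff (\<lambda>x. complex_of_real (f x)) n)"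
  using fcoeff_cnj[of "\<lambda>x. complex_of_real (f x)" "-n"] by simp




lemma infsum_fin:
  assumes "finite F" "\<And>k. k \<notin> F \<Longrightarrow> g k = 0"
  shows "infsum g UNIV = sum g F"
proof -
  have "infsum g UNIV = infsum g F"
    by (rule infsum_cong_neutral) (use assms in auto)
  then show ?thesis using assms by simp
qed

definition Rm :: "(int \<Rightarrow> complex) \<Rightarrow> int \<Rightarrow> int \<Rightarrow> int \<Rightarrow> complex" where
  "Rm V j m k = V (m-k) * (of_bool (\<bar>m\<bar> - \<bar>k\<bar> = j) + of_bool (\<bar>m\<bar> - \<bar>k\<bar> = -j)) / 2
     - of_bool (m - k = j) * V j / 2 - of_bool (m - k = -j) * cnj (V j) / 2"

definition Sk :: "int \<Rightarrow> int \<Rightarrow> int set" where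
  "Sk j k = {k+j, k-j, -k+j, -k-j}"

lemma Sk_finite: "finite (Sk j k)" by (simp add: Sk_def)

lemma Sk_card: "card (Sk j k) \<le> 4"
proof -
  have "Sk j k = set [k+j, k-j, -k+j, -k-j]" by (simp add: Sk_def)
  then show ?thesis using card_length[of "[k+j, k-j, -k+j, -k-j]"] by simp
qed

lemma Rm_zero: assumes "m \<notin> Sk j k" shows "Rm V j m k = 0"
proof -
  have "m - k \<noteq> j" "m - k \<noteq> -j" "\<bar>m\<bar> - \<bar>k\<bar> \<noteq> j" "\<bar>m\<bar> - \<bar>k\<bar> \<noteq> -j"
    using assms unfolding Sk_def by (auto simp: abs_if split: if_splits)
  then show ?thesis unfolding Rm_def by simp
qed

lemma Rm_sym:
  assumes "\<And>n. V (-n) = cnj (V n)"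
  shows "Rm V j k m = cnj (Rm V j m k)"
proof -
  have "V (k - m) = cnj (V (m - k))" using assms[of "m-k"] by simp
  moreover have "cnj (cnj (V j)) = V j" by simp
  ultimately show ?thesis unfolding Rm_def
    by (auto simp: of_bool_def)
qed

definition Wc :: "(int \<Rightarrow> complex) \<Rightarrow> int \<Rightarrow> int \<Rightarrow> complex" where
  "Wc V j n = of_bool (n = j) * V j / 2 + of_bool (n = -j) * cnj (V j) / 2 - of_bool (n = 0)"

definition Tm :: "(int \<Rightarrow> complex) \<Rightarrow> int \<Rightarrow> int \<Rightarrow> int \<Rightarrow> complex" where
  "Tm V j m k = V (m-k) * (of_bool (\<bar>m\<bar> - \<bar>k\<bar> = j) + of_bool (\<bar>m\<bar> - \<bar>k\<bar> = -j)) / 2 - of_bool (m = k)"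

lemma Tm_split: "Tm V j m k = Wc V j (m - k) + Rm V j m k"
  unfolding Tm_def Wc_def Rm_def by (simp add: algebra_simps)




lemma Rm_bound:
  assumes dec: "\<And>N. \<exists>D. \<forall>n. (1 + real_of_int \<bar>n\<bar>)^N * norm (V n) \<le> D"
    and sym: "\<And>n. V (-n) = cnj (V n)" and j: "j \<noteq> 0"
  shows "\<exists>C. \<forall>m k. (2 + real_of_int \<bar>k\<bar>)^N * real_of_int \<bar>m-k\<bar>^\<alpha> * norm (Rm V j m k) \<le> C"
proof -
  obtain D where D: "\<And>n. (1 + real_of_int \<bar>n\<bar>)^(N+\<alpha>) * norm (V n) \<le> D" using dec by blast
  have D0: "0 \<le> D" using D[of 0] by (auto intro: order_trans[rotated])
  define C where "C = 2 * (2 + real_of_int \<bar>j\<bar>)^N * real_of_int \<bar>j\<bar>^\<alpha> * norm (V j) + (2 + real_of_int \<bar>j\<bar>)^N * D"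
  have nj: "norm (V (-j)) = norm (V j)" using sym[of j] by simp
  show ?thesis
  proof (intro exI allI)
    fix m k
    let ?L = "(2 + real_of_int \<bar>k\<bar>)^N * real_of_int \<bar>m-k\<bar>^\<alpha> * norm (Rm V j m k)"
    have C1: "0 \<le> 2 * (2 + real_of_int \<bar>j\<bar>)^N * real_of_int \<bar>j\<bar>^\<alpha> * norm (V j)" by simp
    have C2: "0 \<le> (2 + real_of_int \<bar>j\<bar>)^N * D" using D0 by simp
    show "?L \<le> C"
    proof (cases "m - k = j \<or> m - k = -j")
      case True
      show ?thesis
      proof (cases "\<bar>k\<bar> > \<bar>j\<bar>")
        case big: True
        have "Rm V j m k = 0"
        proof (cases "m - k = j")
          case True
          then have "(\<bar>m\<bar> - \<bar>k\<bar> = j \<and> \<bar>m\<bar> - \<bar>k\<bar> \<noteq> -j) \<or> (\<bar>m\<bar> - \<bar>k\<bar> = -j \<and> \<bar>m\<bar> - \<bar>k\<bar> \<noteq> j)"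
            using big j by (auto simp: abs_if)
          moreover have "m - k \<noteq> -j" using True j by simp
          ultimately show ?thesis unfolding Rm_def using True by auto
        next
          case False
          then have mk: "m - k = -j" using \<open>m - k = j \<or> m - k = -j\<close> by simp
          then have "(\<bar>m\<bar> - \<bar>k\<bar> = j \<and> \<bar>m\<bar> - \<bar>k\<bar> \<noteq> -j) \<or> (\<bar>m\<bar> - \<bar>k\<bar> = -j \<and> \<bar>m\<bar> - \<bar>k\<bar> \<noteq> j)"
            using big j by (auto simp: abs_if)
          then show ?thesis unfolding Rm_def using mk False sym[of j] by auto
        qed
        then show ?thesis using C1 C2 by (simp add: C_def)
      next
        case False
        have mkj: "\<bar>m - k\<bar> = \<bar>j\<bar>" using True by auto
        have nR: "norm (Rm V j m k) \<le> 2 * norm (V j)"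
        proof -
          have "norm (Rm V j m k) \<le> norm (V (m-k) * (of_bool (\<bar>m\<bar> - \<bar>k\<bar> = j) + of_bool (\<bar>m\<bar> - \<bar>k\<bar> = -j)) / 2)
              + norm (of_bool (m - k = j) * V j / 2) + norm (of_bool (m - k = -j) * cnj (V j) / 2)"
            unfolding Rm_def by (rule order_trans[OF norm_triangle_ineq4]) (simp add: norm_triangle_ineq4)
          also have "\<dots> \<le> norm (V (m-k)) + norm (V j) / 2 + norm (V j) / 2"
          proof -
            have a: "norm (of_bool (\<bar>m\<bar> - \<bar>k\<bar> = j) + of_bool (\<bar>m\<bar> - \<bar>k\<bar> = -j) :: complex) \<le> 2"
              by (auto simp: of_bool_def)
            have "norm (V (m-k) * (of_bool (\<bar>m\<bar> - \<bar>k\<bar> = j) + of_bool (\<bar>m\<bar> - \<bar>k\<bar> = -j)) / 2) \<le> norm (V (m-k))"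
              using mult_left_mono[OF a, of "norm (V (m-k))"] by (simp add: norm_mult norm_divide)
            moreover have "norm (of_bool (m - k = j) * V j / 2) \<le> norm (V j) / 2" by (simp add: norm_mult norm_divide)
            moreover have "norm (of_bool (m - k = -j) * cnj (V j) / 2) \<le> norm (V j) / 2" by (simp add: norm_mult norm_divide)
            ultimately show ?thesis by linarith
          qed
          also have "norm (V (m-k)) = norm (V j)" using True nj by auto
          finally show ?thesis by simp
        qed
        have "?L \<le> (2 + real_of_int \<bar>j\<bar>)^N * real_of_int \<bar>j\<bar>^\<alpha> * (2 * norm (V j))"
          using False mkj nR by (intro mult_mono power_mono) auto
        then show ?thesis using C2 by (simp add: C_def algebra_simps)
      qed
    next
      case False
      show ?thesis
      proof (cases "\<bar>m\<bar> - \<bar>k\<bar> = j \<or> \<bar>m\<bar> - \<bar>k\<bar> = -j")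
        case False2: False
        then have "Rm V j m k = 0" using False unfolding Rm_def by auto
        then show ?thesis using C1 C2 by (simp add: C_def)
      next
        case True
        have kk: "2 * \<bar>k\<bar> \<le> \<bar>j\<bar> + \<bar>m - k\<bar>" using True False by arith
        have nR: "norm (Rm V j m k) \<le> norm (V (m-k))"
        proof -
          have eq: "Rm V j m k = V (m-k) * (of_bool (\<bar>m\<bar> - \<bar>k\<bar> = j) + of_bool (\<bar>m\<bar> - \<bar>k\<bar> = -j)) / 2"
            using False unfolding Rm_def by auto
          have b: "norm (of_bool (\<bar>m\<bar> - \<bar>k\<bar> = j) + of_bool (\<bar>m\<bar> - \<bar>k\<bar> = -j) :: complex) \<le> 2"
            by (auto simp: of_bool_def)
          have "norm (Rm V j m k) = norm (V (m-k)) * norm (of_bool (\<bar>m\<bar> - \<bar>k\<bar> = j) + of_bool (\<bar>m\<bar> - \<bar>k\<bar> = -j) :: complex) / 2"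
            unfolding eq by (simp add: norm_mult norm_divide)
          also have "\<dots> \<le> norm (V (m-k)) * 2 / 2"
            by (intro divide_right_mono mult_left_mono b) auto
          finally show ?thesis by simp
        qed
        have k1: "2 + real_of_int \<bar>k\<bar> \<le> (2 + real_of_int \<bar>j\<bar>) * (1 + real_of_int \<bar>m - k\<bar>)"
        proof -
          have "real_of_int (2 * \<bar>k\<bar>) \<le> real_of_int (\<bar>j\<bar> + \<bar>m - k\<bar>)" using kk by (simp only: of_int_le_iff)
          then have h: "2 * real_of_int \<bar>k\<bar> \<le> real_of_int \<bar>j\<bar> + real_of_int \<bar>m - k\<bar>" by simp
          have p: "0 \<le> real_of_int \<bar>j\<bar> * real_of_int \<bar>m - k\<bar>" by simp
          have e: "(2 + real_of_int \<bar>j\<bar>) * (1 + real_of_int \<bar>m - k\<bar>) = 2 + 2 * real_of_int \<bar>m - k\<bar> + real_of_int \<bar>j\<bar> + real_of_int \<bar>j\<bar> * real_of_int \<bar>m - k\<bar>"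
            by (simp add: algebra_simps)
          have q: "0 \<le> real_of_int \<bar>m - k\<bar>" "0 \<le> real_of_int \<bar>k\<bar>" by simp_all
          show ?thesis unfolding e using h p q by linarith
        qed
        have "?L \<le> ((2 + real_of_int \<bar>j\<bar>) * (1 + real_of_int \<bar>m - k\<bar>))^N * (1 + real_of_int \<bar>m - k\<bar>)^\<alpha> * norm (V (m-k))"
          using k1 nR by (intro mult_mono power_mono) auto
        also have "\<dots> = (2 + real_of_int \<bar>j\<bar>)^N * ((1 + real_of_int \<bar>m - k\<bar>)^(N+\<alpha>) * norm (V (m-k)))"
          by (simp only: power_mult_distrib power_add mult_ac)
        also have "\<dots> \<le> (2 + real_of_int \<bar>j\<bar>)^N * D"
          using D[of "m-k"] by (intro mult_left_mono) auto
        finally show ?thesis using C1 unfolding C_def by linarith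
      qed
    qed
  qed
qed




abbreviation Ee :: "int \<Rightarrow> real \<Rightarrow> complex" where
  "Ee q s \<equiv> exp (\<i> * of_int q * of_real s)"

definition Ad :: "(int \<Rightarrow> complex) \<Rightarrow> int \<Rightarrow> nat \<Rightarrow> int \<Rightarrow> real \<Rightarrow> complex" where
  "Ad V j \<alpha> k x = (\<Sum>m\<in>Sk j k. Rm V j m k * (\<i> * of_int (m-k))^\<alpha> * Ee (m-k) x)"

definition asym :: "(int \<Rightarrow> complex) \<Rightarrow> int \<Rightarrow> real \<Rightarrow> real \<Rightarrow> complex" where
  "asym V j x \<xi> = complex_of_real (phi (\<xi> - of_int (round \<xi>))) * Ad V j 0 (round \<xi>) x"

lemma fcoeff_Ad0: "fcoeff (Ad V j 0 k) n = Rm V j (n+k) k"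
proof -
  have "fcoeff (Ad V j 0 k) n = (\<Sum>m\<in>Sk j k. fcoeff (\<lambda>x. Rm V j m k * Ee (m-k) x) n)"
    unfolding Ad_def by (simp add: fcoeff_sum[OF Sk_finite] continuous_intros)
  also have "\<dots> = (\<Sum>m\<in>Sk j k. if m = n + k then Rm V j m k else 0)"
    by (intro sum.cong refl) (simp only: fcoeff_cmult fcoeff_exp, auto)
  also have "\<dots> = Rm V j (n+k) k"
    using Rm_zero[of "n+k" j k V] by (auto simp: sum.delta[OF Sk_finite])
  finally show ?thesis .
qed

lemma asym_int: "asym V j x (of_int k) = Ad V j 0 k x"
  by (simp add: asym_def phi_0)

lemma fcoeff_asym: "fcoeff (\<lambda>x. asym V j x (of_int k)) (m - k) = Rm V j m k"
  unfolding asym_int using fcoeff_Ad0[of V j k "m-k"] by simp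

lemma Op_asym:
  assumes "finsupp c"
  shows "Op (asym V j) c m = (\<Sum>k\<in>{k. c k \<noteq> 0}. Rm V j m k * c k)"
  unfolding Op_def fcoeff_asym
  by (rule infsum_fin) (use assms in \<open>auto simp: finsupp_def\<close>)


lemma Ee_mult: "Ee a s * Ee b s = Ee (a + b) s"
proof -
  have e: "\<i> * of_int a * of_real s + \<i> * of_int b * of_real s = \<i> * of_int (a+b) * (of_real s :: complex)"
    by (simp add: algebra_simps)
  show ?thesis unfolding exp_add[symmetric] e by (rule refl)
qed

lemma expK0_comb: "exp (\<i> * of_real s * of_int (\<bar>m\<bar> + 1)) * exp (\<i> * of_real (-s) * of_int (\<bar>k\<bar> + 1)) = Ee (\<bar>m\<bar> - \<bar>k\<bar>) s"
proof -
  have e: "\<i> * of_real s * of_int (\<bar>m\<bar> + 1) + \<i> * of_real (-s) * of_int (\<bar>k\<bar> + 1) = \<i> * of_int (\<bar>m\<bar> - \<bar>k\<bar>) * (of_real s :: complex)"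
    by (simp add: algebra_simps)
  show ?thesis unfolding exp_add[symmetric] e by (rule refl)
qed

lemma cos_Ee: "complex_of_real (cos (of_int j * s)) = (Ee j s + Ee (-j) s) / 2"
proof -
  have "complex_of_real (cos (of_int j * s)) = cos (of_real (of_int j * s))" by (rule cos_of_real[symmetric])
  also have "\<dots> = (exp (\<i> * of_real (of_int j * s)) + exp (- (\<i> * of_real (of_int j * s)))) / 2"
    by (rule cos_exp_eq)
  also have "\<i> * of_real (of_int j * s) = \<i> * of_int j * (of_real s :: complex)" by simp
  also have "- (\<i> * of_int j * (of_real s :: complex)) = \<i> * of_int (-j) * of_real s" by simp
  finally show ?thesis .
qed

lemma hasE: "(Ee q has_integral (if q = 0 then complex_of_real (2*pi) else 0)) {0..2*pi}"
proof -
  have "Ee q integrable_on {0..2*pi}"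
    by (intro integrable_continuous_interval continuous_intros)
  from integrable_integral[OF this] show ?thesis by (simp add: integral_exp_int)
qed

lemma fcoeff_fs:
  assumes "continuous_on UNIV v"
  shows "fcoeff (\<lambda>x. complex_of_real (cos (of_int j * t) * v x - 1)) n
     = complex_of_real (cos (of_int j * t)) * fcoeff (\<lambda>y. complex_of_real (v y)) n - of_bool (n = 0)"
proof -
  have cv: "continuous_on {0..2*pi} (\<lambda>x. complex_of_real (v x))"
    by (intro continuous_intros continuous_on_subset[OF assms]) auto
  have "fcoeff (\<lambda>x. complex_of_real (cos (of_int j * t) * v x - 1)) n
      = fcoeff (\<lambda>x. complex_of_real (cos (of_int j * t)) * complex_of_real (v x) - 1) n" by simp
  also have "\<dots> = complex_of_real (cos (of_int j * t)) * fcoeff (\<lambda>y. complex_of_real (v y)) n - fcoeff (\<lambda>x. 1) n"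
    by (subst fcoeff_diff) (auto intro!: continuous_intros cv simp: fcoeff_cmult)
  finally show ?thesis by (simp add: fcoeff_const)
qed

lemma res_avg_eq:
  assumes cont: "continuous_on UNIV v" and fin: "finsupp c"
  shows "res_avg (\<lambda>t. mult_op (\<lambda>x. complex_of_real (cos (of_int j * t) * v x - 1))) c m
     = (\<Sum>k\<in>{k. c k \<noteq> 0}. Tm (fcoeff (\<lambda>y. complex_of_real (v y))) j m k * c k)"
proof -
  define F where "F = {k. c k \<noteq> 0}"
  have F: "finite F" using fin by (simp add: F_def finsupp_def)
  define V where "V = fcoeff (\<lambda>y. complex_of_real (v y))"
  define p where "p k = \<bar>m\<bar> - \<bar>k\<bar>" for k
  define g where "g s = (\<Sum>k\<in>F. c k * V (m-k) / 2 * Ee (p k + j) s + c k * V (m-k) / 2 * Ee (p k + (-j)) s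
       - c k * of_bool (m = k) * Ee (p k) s)" for s
  have pw: "expK0 s (mult_op (\<lambda>x. complex_of_real (cos (of_int j * s) * v x - 1)) (expK0 (-s) c)) m = g s" for s
  proof -
    have mo: "mult_op (\<lambda>x. complex_of_real (cos (of_int j * s) * v x - 1)) (expK0 (-s) c) m
       = (\<Sum>k\<in>F. (complex_of_real (cos (of_int j * s)) * V (m-k) - of_bool (m - k = 0)) * (exp (\<i> * of_real (-s) * of_int (\<bar>k\<bar> + 1)) * c k))"
      unfolding mult_op_def fcoeff_fs[OF cont] V_def[symmetric] expK0_def[of "-s"]
      by (rule infsum_fin[OF F]) (simp add: F_def)
    have "expK0 s (mult_op (\<lambda>x. complex_of_real (cos (of_int j * s) * v x - 1)) (expK0 (-s) c)) m
       = exp (\<i> * of_real s * of_int (\<bar>m\<bar> + 1)) * mult_op (\<lambda>x. complex_of_real (cos (of_int j * s) * v x - 1)) (expK0 (-s) c) m"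
      by (simp only: expK0_def)
    also have "\<dots> = (\<Sum>k\<in>F. exp (\<i> * of_real s * of_int (\<bar>m\<bar> + 1)) * ((complex_of_real (cos (of_int j * s)) * V (m-k) - of_bool (m - k = 0)) * (exp (\<i> * of_real (-s) * of_int (\<bar>k\<bar> + 1)) * c k)))"
      unfolding mo sum_distrib_left ..
    also have "\<dots> = g s"
      unfolding g_def
    proof (intro sum.cong refl)
      fix k
      let ?a = "exp (\<i> * of_real s * of_int (\<bar>m\<bar> + 1))" and ?b = "exp (\<i> * of_real (-s) * of_int (\<bar>k\<bar> + 1))"
      have ab: "?a * ?b = Ee (p k) s" unfolding p_def by (rule expK0_comb)
      have "?a * ((complex_of_real (cos (of_int j * s)) * V (m-k) - of_bool (m - k = 0)) * (?b * c k))
          = c k * V (m-k) * (complex_of_real (cos (of_int j * s)) * (?a * ?b)) - c k * of_bool (m = k) * (?a * ?b)"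
        by (simp add: algebra_simps)
      also have "\<dots> = c k * V (m-k) / 2 * (Ee j s * Ee (p k) s) + c k * V (m-k) / 2 * (Ee (-j) s * Ee (p k) s) - c k * of_bool (m = k) * Ee (p k) s"
        unfolding ab cos_Ee by (simp add: algebra_simps add_divide_distrib)
      also have "\<dots> = c k * V (m-k) / 2 * Ee (p k + j) s + c k * V (m-k) / 2 * Ee (p k + (-j)) s - c k * of_bool (m = k) * Ee (p k) s"
        by (simp only: Ee_mult add.commute)
      finally show "?a * ((complex_of_real (cos (of_int j * s)) * V (m-k) - of_bool (m - k = 0)) * (?b * c k)) = \<dots>" .
    qed
    finally show ?thesis .
  qed
  have hi: "(g has_integral (\<Sum>k\<in>F. c k * V (m-k) / 2 * (if p k + j = 0 then complex_of_real (2*pi) else 0)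
      + c k * V (m-k) / 2 * (if p k + (-j) = 0 then complex_of_real (2*pi) else 0)
      - c k * of_bool (m = k) * (if p k = 0 then complex_of_real (2*pi) else 0))) {0..2*pi}"
    unfolding g_def[abs_def]
    by (intro has_integral_sum[OF F] has_integral_add has_integral_diff has_integral_mult_right hasE)
  have "res_avg (\<lambda>t. mult_op (\<lambda>x. complex_of_real (cos (of_int j * t) * v x - 1))) c m = integral {0..2*pi} g / complex_of_real (2*pi)"
    unfolding res_avg_def pw by simp
  also have "\<dots> = (\<Sum>k\<in>F. c k * V (m-k) / 2 * (if p k + j = 0 then complex_of_real (2*pi) else 0)
      + c k * V (m-k) / 2 * (if p k + (-j) = 0 then complex_of_real (2*pi) else 0)
      - c k * of_bool (m = k) * (if p k = 0 then complex_of_real (2*pi) else 0)) / complex_of_real (2*pi)"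
    using integral_unique[OF hi] by simp
  also have "\<dots> = (\<Sum>k\<in>F. Tm V j m k * c k)"
    unfolding sum_divide_distrib
  proof (intro sum.cong refl)
    fix k
    show "(c k * V (m-k) / 2 * (if p k + j = 0 then complex_of_real (2*pi) else 0)
      + c k * V (m-k) / 2 * (if p k + (-j) = 0 then complex_of_real (2*pi) else 0)
      - c k * of_bool (m = k) * (if p k = 0 then complex_of_real (2*pi) else 0)) / complex_of_real (2*pi) = Tm V j m k * c k"
      unfolding Tm_def p_def by (auto simp: field_simps)
  qed
  finally show ?thesis by (simp add: F_def V_def)
qed


lemma Re_Ee: "complex_of_real (Re (a * exp (\<i> * of_int j * of_real x)) - 1) = a / 2 * Ee j x + cnj a / 2 * Ee (-j) x - 1"
proof -
  have cn: "cnj (a * Ee j x) = cnj a * Ee (-j) x"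
    by (simp add: exp_cnj)
  have "complex_of_real (Re (a * Ee j x)) = (a * Ee j x + cnj (a * Ee j x)) / 2"
    unfolding complex_add_cnj by simp
  then show ?thesis unfolding cn by (simp add: add_divide_distrib)
qed

lemma fcoeff_W: "fcoeff (\<lambda>x. complex_of_real (Re (a * exp (\<i> * of_int j * of_real x)) - 1)) n
   = of_bool (n = j) * a / 2 + of_bool (n = -j) * cnj a / 2 - of_bool (n = 0)"
proof -
  have "fcoeff (\<lambda>x. complex_of_real (Re (a * exp (\<i> * of_int j * of_real x)) - 1)) n
     = fcoeff (\<lambda>x. a / 2 * Ee j x + cnj a / 2 * Ee (-j) x - 1) n"
    unfolding Re_Ee ..
  also have "\<dots> = fcoeff (\<lambda>x. a / 2 * Ee j x) n + fcoeff (\<lambda>x. cnj a / 2 * Ee (-j) x) n - fcoeff (\<lambda>x. 1) n"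
    by (subst fcoeff_diff, (intro continuous_intros)+, subst fcoeff_add, (intro continuous_intros)+, rule refl)
  also have "\<dots> = of_bool (n = j) * a / 2 + of_bool (n = -j) * cnj a / 2 - of_bool (n = 0)"
    unfolding fcoeff_cmult fcoeff_exp fcoeff_const by auto
  finally show ?thesis .
qed

lemma mult_op_W:
  assumes fin: "finsupp c"
  shows "mult_op (\<lambda>x. complex_of_real (Re (V j * exp (\<i> * of_int j * of_real x)) - 1)) c m
     = (\<Sum>k\<in>{k. c k \<noteq> 0}. Wc V j (m - k) * c k)"
  unfolding mult_op_def fcoeff_W Wc_def
  by (rule infsum_fin) (use fin in \<open>auto simp: finsupp_def Wc_def\<close>)

lemma main_eq:
  assumes cont: "continuous_on UNIV v" and fin: "finsupp c"
  shows "res_avg (\<lambda>t. mult_op (\<lambda>x. complex_of_real (cos (of_int j * t) * v x - 1))) c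
     = (\<lambda>m. mult_op (\<lambda>x. complex_of_real
                 (Re (fcoeff (\<lambda>y. complex_of_real (v y)) j * exp (\<i> * of_int j * of_real x)) - 1)) c m
             + Op (asym (fcoeff (\<lambda>y. complex_of_real (v y))) j) c m)"
proof
  fix m
  let ?V = "fcoeff (\<lambda>y. complex_of_real (v y))"
  show "res_avg (\<lambda>t. mult_op (\<lambda>x. complex_of_real (cos (of_int j * t) * v x - 1))) c m = 
     mult_op (\<lambda>x. complex_of_real (Re (?V j * exp (\<i> * of_int j * of_real x)) - 1)) c m + Op (asym ?V j) c m"
    unfolding res_avg_eq[OF cont fin] mult_op_W[OF fin] Op_asym[OF fin] Tm_split
    by (simp add: sum.distrib distrib_right)
qed

lemma Rm_sym':
  assumes sym: "\<And>n. V (-n) = cnj (V n)"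
  shows "cnj (Rm V j k m) = Rm V j m k"
  using Rm_sym[of V, OF sym, of j k m] by simp

lemma selfadj:
  assumes sym: "\<And>n. V (-n) = cnj (V n)"
  shows "selfadjoint_op (Op (asym V j))"
  unfolding selfadjoint_op_def
proof (intro allI impI)
  fix c d :: "int \<Rightarrow> complex" assume c: "finsupp c" and d: "finsupp d"
  define Fc where "Fc = {k. c k \<noteq> 0}"
  define Fd where "Fd = {k. d k \<noteq> 0}"
  have fc: "finite Fc" and fd: "finite Fd" using c d by (auto simp: Fc_def Fd_def finsupp_def)
  have "(\<Sum>\<^sub>\<infinity>m. Op (asym V j) c m * cnj (d m)) = (\<Sum>m\<in>Fd. Op (asym V j) c m * cnj (d m))"
    by (rule infsum_fin[OF fd]) (simp add: Fd_def)
  also have "\<dots> = (\<Sum>m\<in>Fd. \<Sum>k\<in>Fc. Rm V j m k * c k * cnj (d m))"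
    unfolding Op_asym[OF c] Fc_def[symmetric] by (simp add: sum_distrib_right)
  also have "\<dots> = (\<Sum>k\<in>Fc. \<Sum>m\<in>Fd. Rm V j m k * c k * cnj (d m))"
    by (rule sum.swap)
  also have "\<dots> = (\<Sum>k\<in>Fc. c k * cnj (\<Sum>m\<in>Fd. Rm V j k m * d m))"
    by (simp add: sum_distrib_left Rm_sym'[of V, OF sym] mult_ac)
  also have "\<dots> = (\<Sum>k\<in>Fc. c k * cnj (Op (asym V j) d k))"
    unfolding Op_asym[OF d] Fd_def ..
  also have "\<dots> = (\<Sum>\<^sub>\<infinity>m. c m * cnj (Op (asym V j) d m))"
    by (rule infsum_fin[OF fc, symmetric]) (simp add: Fc_def)
  finally show "(\<Sum>\<^sub>\<infinity>m. Op (asym V j) c m * cnj (d m)) = (\<Sum>\<^sub>\<infinity>m. c m * cnj (Op (asym V j) d m))" .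
qed




lemma Ee_deriv: "(Ee q has_vector_derivative (\<i> * of_int q * Ee q x)) (at x)"
proof -
  have "((\<lambda>z. exp (\<i> * of_int q * z)) has_field_derivative exp (\<i> * of_int q * of_real x) * (\<i> * of_int q)) (at (of_real x :: complex))"
    by (auto intro!: derivative_eq_intros)
  from has_vector_derivative_real_field[OF this] show ?thesis by (simp add: mult.commute)
qed

lemma Ad_deriv: "((\<lambda>y. Ad V j \<alpha> k y) has_vector_derivative Ad V j (Suc \<alpha>) k x) (at x)"
proof -
  have "((\<lambda>y. \<Sum>m\<in>Sk j k. Rm V j m k * (\<i> * of_int (m-k))^\<alpha> * Ee (m-k) y) has_vector_derivative
        (\<Sum>m\<in>Sk j k. Rm V j m k * (\<i> * of_int (m-k))^\<alpha> * (\<i> * of_int (m-k) * Ee (m-k) x))) (at x)"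
    by (intro has_vector_derivative_sum has_vector_derivative_mult_right Ee_deriv)
  then show ?thesis unfolding Ad_def by (simp add: mult_ac)
qed

lemma Ad_cont: "continuous_on S (Ad V j \<alpha> k)"
  unfolding Ad_def by (intro continuous_intros)

lemma phi_deriv: "((\<lambda>\<eta>. complex_of_real ((deriv^^\<beta>) phi (\<eta> - of_int k))) has_vector_derivative
    complex_of_real ((deriv^^Suc \<beta>) phi (\<xi> - of_int k))) (at \<xi>)"
proof -
  have "((\<lambda>\<eta>. (deriv^^\<beta>) phi (\<eta> - of_int k)) has_real_derivative (deriv^^Suc \<beta>) phi (\<xi> - of_int k) * 1) (at \<xi>)"
    by (intro DERIV_chain2[OF sm_D[OF sm_phi]]) (auto intro!: derivative_eq_intros)
  then show ?thesis by (intro has_vector_derivative_of_real) simp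
qed

definition cT :: "bool list \<Rightarrow> nat" where "cT ws = length (filter id ws)"
definition cF :: "bool list \<Rightarrow> nat" where "cF ws = length (filter Not ws)"

definition bsym :: "(int \<Rightarrow> complex) \<Rightarrow> int \<Rightarrow> int \<Rightarrow> real \<Rightarrow> real \<Rightarrow> complex" where
  "bsym V j k x \<xi> = complex_of_real (phi (\<xi> - of_int k)) * Ad V j 0 k x"

lemma pdword_bsym: "pdword ws (bsym V j k) = (\<lambda>x \<xi>. complex_of_real ((deriv^^(cF ws)) phi (\<xi> - of_int k)) * Ad V j (cT ws) k x)"
proof (induction ws)
  case Nil then show ?case by (simp add: bsym_def cT_def cF_def fun_eq_iff)
next
  case (Cons b ws)
  show ?case
  proof (cases b)
    case True
    have "pdx (\<lambda>x \<xi>. complex_of_real ((deriv^^(cF ws)) phi (\<xi> - of_int k)) * Ad V j (cT ws) k x)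
      = (\<lambda>x \<xi>. complex_of_real ((deriv^^(cF ws)) phi (\<xi> - of_int k)) * Ad V j (Suc (cT ws)) k x)"
      unfolding pdx_def
      by (intro ext vector_derivative_at has_vector_derivative_mult_right Ad_deriv)
    then show ?thesis using Cons True by (simp add: cT_def cF_def)
  next
    case False
    have "pdxi (\<lambda>x \<xi>. complex_of_real ((deriv^^(cF ws)) phi (\<xi> - of_int k)) * Ad V j (cT ws) k x)
      = (\<lambda>x \<xi>. complex_of_real ((deriv^^(Suc (cF ws))) phi (\<xi> - of_int k)) * Ad V j (cT ws) k x)"
      unfolding pdxi_def
      by (intro ext vector_derivative_at has_vector_derivative_mult_left phi_deriv)
    then show ?thesis using Cons False by (simp add: cT_def cF_def)
  qed
qed

lemma pdword_local:
  assumes "open B" "\<And>x \<xi>. \<xi> \<in> B \<Longrightarrow> a x \<xi> = b x \<xi>"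
  shows "\<xi> \<in> B \<Longrightarrow> pdword ws a x \<xi> = pdword ws b x \<xi>"
proof (induction ws arbitrary: x \<xi>)
  case Nil then show ?case using assms by simp
next
  case (Cons c ws)
  show ?case
  proof (cases c)
    case True
    have "(\<lambda>y. pdword ws a y \<xi>) = (\<lambda>y. pdword ws b y \<xi>)" using Cons by auto
    then show ?thesis using True by (simp add: pdx_def)
  next
    case False
    have ev: "eventually (\<lambda>\<eta>. \<eta> \<in> UNIV \<longrightarrow> pdword ws a x \<eta> = pdword ws b x \<eta>) (nhds \<xi>)"
      using eventually_nhds_in_open[OF assms(1) Cons.prems] by (rule eventually_mono) (use Cons.IH in auto)
    have "vector_derivative (\<lambda>\<eta>. pdword ws a x \<eta>) (at \<xi>) = vector_derivative (\<lambda>\<eta>. pdword ws b x \<eta>) (at \<xi>)"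
      by (rule vector_derivative_cong_eq[OF ev]) auto
    then show ?thesis using False by (simp add: pdxi_def)
  qed
qed

lemma asym_local:
  assumes "\<bar>\<xi> - \<xi>0\<bar> < 1/8"
  shows "asym V j x \<xi> = bsym V j (round \<xi>0) x \<xi>"
proof (cases "round \<xi> = round \<xi>0")
  case True then show ?thesis by (simp add: asym_def bsym_def)
next
  case False
  let ?k = "round \<xi>" and ?kz = "round \<xi>0"
  have m: "\<bar>\<xi> - of_int ?k\<bar> \<le> \<bar>\<xi> - of_int ?kz\<bar>" using round_diff_minimal[of \<xi> "round \<xi>0"] by simp
  have h0: "\<bar>of_int ?kz - \<xi>0\<bar> \<le> 1/2" by (rule of_int_round_abs_le)
  have "\<bar>?k - ?kz\<bar> \<ge> 1" using False by linarith
  then have d1: "\<bar>real_of_int ?k - of_int ?kz\<bar> \<ge> 1" by (metis of_int_abs of_int_diff of_int_le_iff of_int_1)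
  have a: "\<bar>\<xi> - of_int ?kz\<bar> \<ge> 1/2" using m d1 by linarith
  have b: "\<bar>\<xi> - of_int ?k\<bar> \<ge> 1/4" using a d1 h0 assms by linarith
  have "phi (\<xi> - of_int ?k) = 0" "phi (\<xi> - of_int ?kz) = 0"
    using a b by (auto intro!: phi_zero)
  then show ?thesis by (simp add: asym_def bsym_def)
qed

lemma pdword_asym:
  "pdword ws (asym V j) x \<xi> = complex_of_real ((deriv^^(cF ws)) phi (\<xi> - of_int (round \<xi>))) * Ad V j (cT ws) (round \<xi>) x"
proof -
  have "pdword ws (asym V j) x \<xi> = pdword ws (bsym V j (round \<xi>)) x \<xi>"
    by (rule pdword_local[of "ball \<xi> (1/8)"]) (auto simp: dist_real_def abs_minus_commute intro!: asym_local)
  then show ?thesis by (simp add: pdword_bsym)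
qed

lemma pdword_asym_local:
  assumes "\<bar>\<eta> - \<xi>\<bar> < 1/8"
  shows "pdword ws (asym V j) x \<eta> = complex_of_real ((deriv^^(cF ws)) phi (\<eta> - of_int (round \<xi>))) * Ad V j (cT ws) (round \<xi>) x"
proof -
  have "pdword ws (asym V j) x \<eta> = pdword ws (bsym V j (round \<xi>)) x \<eta>"
    by (rule pdword_local[of "ball \<xi> (1/8)"]) (use assms in \<open>auto simp: dist_real_def abs_minus_commute intro!: asym_local\<close>)
  then show ?thesis by (simp add: pdword_bsym)
qed


lemma smooth2_asym: "smooth2 (asym V j)"
  unfolding smooth2_def
proof (intro allI conjI)
  fix ws :: "bool list"
  let ?f = "\<lambda>p::real\<times>real. pdword ws (asym V j) (fst p) (snd p)"
  let ?Q = "\<lambda>k (p::real\<times>real). complex_of_real ((deriv^^(cF ws)) phi (snd p - of_int k)) * Ad V j (cT ws) k (fst p)"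
  have cQ: "continuous_on UNIV (?Q k)" for k
  proof -
    have c1: "continuous_on UNIV (\<lambda>p::real\<times>real. (deriv^^(cF ws)) phi (snd p - of_int k))"
      by (rule continuous_on_compose2[OF sm_cont[OF sm_phi]]) (auto intro!: continuous_intros)
    have c2: "continuous_on UNIV (\<lambda>p::real\<times>real. Ad V j (cT ws) k (fst p))"
      by (rule continuous_on_compose2[OF Ad_cont]) (auto intro!: continuous_intros)
    show ?thesis by (intro continuous_intros c1 c2)
  qed
  have "continuous_on UNIV ?f"
    unfolding continuous_on_eq_continuous_at[OF open_UNIV]
  proof (intro ballI)
    fix p :: "real \<times> real"
    obtain x0 \<xi>0 where p: "p = (x0, \<xi>0)" by fastforce
    have op: "open (UNIV \<times> ball \<xi>0 (1/8))" by (intro open_Times) auto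
    have ev: "eventually (\<lambda>q. ?Q (round \<xi>0) q = ?f q) (nhds p)"
      using eventually_nhds_in_open[OF op, of p] p
      by (auto elim!: eventually_mono intro!: pdword_asym_local[symmetric] simp: dist_real_def abs_minus_commute)
    have "isCont (?Q (round \<xi>0)) p" by (rule continuous_on_interior[OF cQ]) simp
    then show "isCont ?f p" using isCont_cong[OF ev] by simp
  qed
  then show "continuous_on UNIV (\<lambda>(x, \<xi>). pdword ws (asym V j) x \<xi>)"
    by (simp add: case_prod_beta')
  fix x \<xi>
  {
    have "(\<lambda>y. pdword ws (asym V j) y \<xi>) = (\<lambda>y. complex_of_real ((deriv^^(cF ws)) phi (\<xi> - of_int (round \<xi>))) * Ad V j (cT ws) (round \<xi>) y)"
      by (simp add: pdword_asym)
    moreover have "((\<lambda>y. complex_of_real ((deriv^^(cF ws)) phi (\<xi> - of_int (round \<xi>))) * Ad V j (cT ws) (round \<xi>) y) has_vector_derivative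
        complex_of_real ((deriv^^(cF ws)) phi (\<xi> - of_int (round \<xi>))) * Ad V j (Suc (cT ws)) (round \<xi>) x) (at x)"
      by (intro has_vector_derivative_mult_right Ad_deriv)
    ultimately show "(\<lambda>y. pdword ws (asym V j) y \<xi>) differentiable at x"
      by (metis differentiableI_vector)
  }
  {
    have d: "((\<lambda>\<eta>. complex_of_real ((deriv^^(cF ws)) phi (\<eta> - of_int (round \<xi>))) * Ad V j (cT ws) (round \<xi>) x) has_vector_derivative
        complex_of_real ((deriv^^Suc (cF ws)) phi (\<xi> - of_int (round \<xi>))) * Ad V j (cT ws) (round \<xi>) x) (at \<xi>)"
      by (intro has_vector_derivative_mult_left phi_deriv)
    have "((\<lambda>\<eta>. pdword ws (asym V j) x \<eta>) has_vector_derivative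
        complex_of_real ((deriv^^Suc (cF ws)) phi (\<xi> - of_int (round \<xi>))) * Ad V j (cT ws) (round \<xi>) x) (at \<xi>)"
      by (rule has_vector_derivative_transform_within_open[OF d, of "ball \<xi> (1/8)"])
         (auto simp: dist_real_def abs_minus_commute intro!: pdword_asym_local[symmetric])
    then show "(\<lambda>\<eta>. pdword ws (asym V j) x \<eta>) differentiable at \<xi>"
      by (rule differentiableI_vector)
  }
qed

lemma Ee_period: "Ee q (x + 2*pi) = Ee q x"
proof -
  have "Ee q (x + 2*pi) = Ee q x * exp ((2 * of_int q * pi) * \<i>)"
    unfolding exp_add[symmetric] by (simp add: algebra_simps)
  also have "exp ((2 * of_int q * pi) * \<i>) = 1" by (rule exp_integer_2pi) simp
  finally show ?thesis by simp
qed

lemma asym_period: "asym V j (x + 2*pi) \<xi> = asym V j x \<xi>"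
  unfolding asym_def Ad_def Ee_period by (rule refl)

lemma pdword_app: "pdword (ws1 @ ws2) a = pdword ws1 (pdword ws2 a)"
  by (induction ws1) auto

lemma pdword_repT: "pdword (replicate n True) a = (pdx^^n) a"
  by (induction n) auto

lemma pdword_repF: "pdword (replicate n False) a = (pdxi^^n) a"
  by (induction n) auto

lemma norm_Ee: "norm (Ee q x) = 1"
proof -
  have "\<i> * of_int q * of_real x = \<i> * complex_of_real (of_int q * x)" by simp
  then show ?thesis by (simp only: norm_exp_i_times)
qed


lemma norm_ii_int: "norm (\<i> * complex_of_int q) = real_of_int \<bar>q\<bar>"
  by (simp add: norm_mult)

lemma norm_ii_pow: "norm ((\<i> * complex_of_int q)^a) = real_of_int \<bar>q\<bar>^a"
  by (simp add: norm_mult norm_power)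

lemma Ad_bound:
  assumes C1: "\<And>m k. (2 + real_of_int \<bar>k\<bar>)^N * real_of_int \<bar>m-k\<bar>^\<alpha> * norm (Rm V j m k) \<le> C1"
  shows "norm (Ad V j \<alpha> k x) \<le> 4 * C1 / (2 + real_of_int \<bar>k\<bar>)^N"
proof -
  have pos: "0 < (2 + real_of_int \<bar>k\<bar>)^N" by simp
  have C0: "0 \<le> C1" by (rule order_trans[OF _ C1[of k k]]) simp
  have t: "norm (Rm V j m k * (\<i> * of_int (m-k))^\<alpha> * Ee (m-k) x) \<le> C1 / (2 + real_of_int \<bar>k\<bar>)^N" for m
  proof -
    have "norm (Rm V j m k * (\<i> * of_int (m-k))^\<alpha> * Ee (m-k) x) = norm (Rm V j m k) * real_of_int \<bar>m-k\<bar>^\<alpha>"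
      by (simp only: norm_mult norm_Ee mult_1_right norm_ii_pow)
    also have "\<dots> \<le> C1 / (2 + real_of_int \<bar>k\<bar>)^N"
      using C1[where m=m and k=k] pos by (simp add: field_simps)
    finally show ?thesis .
  qed
  have "norm (Ad V j \<alpha> k x) \<le> (\<Sum>m\<in>Sk j k. norm (Rm V j m k * (\<i> * of_int (m-k))^\<alpha> * Ee (m-k) x))"
    unfolding Ad_def by (rule norm_sum)
  also have "\<dots> \<le> of_nat (card (Sk j k)) * (C1 / (2 + real_of_int \<bar>k\<bar>)^N)"
    by (rule sum_bounded_above) (rule t)
  also have "\<dots> \<le> 4 * (C1 / (2 + real_of_int \<bar>k\<bar>)^N)"
    using Sk_card[of j k] C0 pos by (intro mult_right_mono) auto
  finally show ?thesis by simp
qed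

lemma asym_bound:
  assumes dec: "\<And>N. \<exists>D. \<forall>n. (1 + real_of_int \<bar>n\<bar>)^N * norm (V n) \<le> D"
    and sym: "\<And>n. V (-n) = cnj (V n)" and j: "j \<noteq> 0"
  shows "\<exists>C. \<forall>x \<xi>. norm ((pdx ^^ \<alpha>) ((pdxi ^^ \<beta>) (asym V j)) x \<xi>) \<le> C * (sqrt (1 + \<xi>\<^sup>2)) powr (- 1 - real \<beta>)"
proof -
  obtain C1 where C1: "\<And>m k. (2 + real_of_int \<bar>k\<bar>)^Suc \<beta> * real_of_int \<bar>m-k\<bar>^\<alpha> * norm (Rm V j m k) \<le> C1"
    using Rm_bound[OF dec sym j, of "Suc \<beta>" \<alpha>] by blast
  have C0: "0 \<le> C1" by (rule order_trans[OF _ C1[of 0 0]]) simp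
  obtain Mb where Mb0: "Mb \<ge> 0" and Mb: "\<And>t. t \<in> {-1/2..1/2} \<Longrightarrow> norm ((deriv^^\<beta>) phi t) \<le> Mb"
    using continuous_on_compact_bound[OF compact_Icc sm_cont[OF sm_phi]] by blast
  show ?thesis
  proof (intro exI allI)
    fix x \<xi> :: real
    let ?k = "round \<xi>"
    let ?ws = "replicate \<alpha> True @ replicate \<beta> False"
    have eq: "(pdx ^^ \<alpha>) ((pdxi ^^ \<beta>) (asym V j)) = pdword ?ws (asym V j)"
      by (simp add: pdword_app pdword_repT pdword_repF)
    have cnt: "cT ?ws = \<alpha>" "cF ?ws = \<beta>" by (simp_all add: cT_def cF_def)
    have dk: "\<bar>\<xi> - of_int ?k\<bar> \<le> 1/2" using of_int_round_abs_le[of \<xi>] by (simp add: abs_minus_commute)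
    have d1: "\<xi> - of_int ?k \<le> 1/2" by (rule abs_le_D1[OF dk])
    have d2: "- (\<xi> - of_int ?k) \<le> 1/2" by (rule abs_le_D2[OF dk])
    have pb: "norm ((deriv^^\<beta>) phi (\<xi> - of_int ?k)) \<le> Mb" by (intro Mb) (use d1 d2 in auto)
    have pos: "0 < (2 + real_of_int \<bar>?k\<bar>)^Suc \<beta>" by simp
    have ab: "norm (Ad V j \<alpha> ?k x) \<le> 4 * C1 / (2 + real_of_int \<bar>?k\<bar>)^Suc \<beta>"
      by (rule Ad_bound[OF C1])
    have val: "norm ((pdx ^^ \<alpha>) ((pdxi ^^ \<beta>) (asym V j)) x \<xi>) \<le> Mb * (4 * C1 / (2 + real_of_int \<bar>?k\<bar>)^Suc \<beta>)"
      unfolding eq pdword_asym cnt norm_mult norm_of_real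
      using pb ab by (intro mult_mono) auto
    define s where "s = sqrt (1 + \<xi>\<^sup>2)"
    have s1: "1 \<le> s" unfolding s_def by simp
    have sk: "s \<le> 2 + real_of_int \<bar>?k\<bar>"
    proof -
      have "\<bar>\<xi>\<bar> \<le> real_of_int \<bar>?k\<bar> + 1/2" using dk by linarith
      then have "\<xi>\<^sup>2 \<le> (real_of_int \<bar>?k\<bar> + 1/2)\<^sup>2"
        by (metis abs_ge_zero power2_abs power_mono)
      then have "1 + \<xi>\<^sup>2 \<le> (2 + real_of_int \<bar>?k\<bar>)\<^sup>2" by (simp add: power2_eq_square algebra_simps)
      then have "s \<le> sqrt ((2 + real_of_int \<bar>?k\<bar>)\<^sup>2)" unfolding s_def by (rule real_sqrt_le_mono)
      then show ?thesis by simp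
    qed
    have "s powr (- 1 - real \<beta>) = 1 / s ^ Suc \<beta>"
    proof -
      have "s powr (- 1 - real \<beta>) = inverse (s powr (real (Suc \<beta>)))"
        using s1 by (simp add: powr_minus[symmetric])
      also have "\<dots> = 1 / s ^ Suc \<beta>"
      proof -
        have pw: "s powr (real (Suc \<beta>)) = s ^ Suc \<beta>" by (rule powr_realpow) (use s1 in simp)
        show ?thesis unfolding pw by (simp only: inverse_eq_divide)
      qed
      finally show ?thesis .
    qed
    moreover have "1 / (2 + real_of_int \<bar>?k\<bar>)^Suc \<beta> \<le> 1 / s ^ Suc \<beta>"
      using s1 sk by (intro divide_left_mono power_mono mult_pos_pos) auto
    ultimately have sp: "1 / (2 + real_of_int \<bar>?k\<bar>)^Suc \<beta> \<le> s powr (- 1 - real \<beta>)" by simp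
    have "Mb * (4 * C1 / (2 + real_of_int \<bar>?k\<bar>)^Suc \<beta>) = (Mb * 4 * C1) * (1 / (2 + real_of_int \<bar>?k\<bar>)^Suc \<beta>)"
      by simp
    also have "\<dots> \<le> (Mb * 4 * C1) * s powr (- 1 - real \<beta>)"
      using sp Mb0 C0 by (intro mult_left_mono) auto
    finally show "norm ((pdx ^^ \<alpha>) ((pdxi ^^ \<beta>) (asym V j)) x \<xi>) \<le> (Mb * 4 * C1) * (sqrt (1 + \<xi>\<^sup>2)) powr (- 1 - real \<beta>)"
      using val unfolding s_def by linarith
  qed
qed

lemma Sper_asym:
  assumes dec: "\<And>N. \<exists>D. \<forall>n. (1 + real_of_int \<bar>n\<bar>)^N * norm (V n) \<le> D"
    and sym: "\<And>n. V (-n) = cnj (V n)" and j: "j \<noteq> 0"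
  shows "Sper (-1) (asym V j)"
  unfolding Sper_def
  using smooth2_asym asym_period asym_bound[OF dec sym j] by auto



theorem mainTheorem18:
  fixes v :: "real \<Rightarrow> real" and j :: int
  assumes "smooth_real v" and "periodic2pi v" and "j \<noteq> 0"
  shows "\<exists>a. Sper (-1) a \<and> selfadjoint_op (Op a) \<and>
    (\<forall>c. finsupp c \<longrightarrow>
       res_avg (\<lambda>t. mult_op (\<lambda>x. complex_of_real (cos (of_int j * t) * v x - 1))) c
       = (\<lambda>m. mult_op (\<lambda>x. complex_of_real
                 (Re (fcoeff (\<lambda>y. complex_of_real (v y)) j * exp (\<i> * of_int j * of_real x)) - 1)) c m
             + Op a c m))"
proof -
  have smv: "sm v" using assms(1) by (simp add: sm_eq)
  have per: "\<And>x. v (x + 2*pi) = v x" using assms(2) by (simp add: periodic2pi_def)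
  let ?V = "fcoeff (\<lambda>y. complex_of_real (v y))"
  have dec: "\<And>N. \<exists>D. \<forall>n. (1 + real_of_int \<bar>n\<bar>)^N * norm (?V n) \<le> D"
    by (rule fourier_decay[OF smv per])
  have sym: "\<And>n. ?V (-n) = cnj (?V n)" by (rule fcoeff_real_cnj)
  have cont: "continuous_on UNIV v" using sm_cont[OF smv, of UNIV 0] by simp
  show ?thesis
  proof (intro exI conjI allI impI)
    show "Sper (-1) (asym ?V j)" by (rule Sper_asym[of ?V, OF dec sym assms(3)])
    show "selfadjoint_op (Op (asym ?V j))" by (rule selfadj[of ?V, OF sym])
    fix c :: "int \<Rightarrow> complex" assume "finsupp c"
    then show "res_avg (\<lambda>t. mult_op (\<lambda>x. complex_of_real (cos (of_int j * t) * v x - 1))) c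
       = (\<lambda>m. mult_op (\<lambda>x. complex_of_real
                 (Re (?V j * exp (\<i> * of_int j * of_real x)) - 1)) c m
             + Op (asym ?V j) c m)"
      by (rule main_eq[OF cont])
  qed
qed

end
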